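(* Let $\mathcal P$ be a family of non-zero real polynomials with no constant term, and let $X\subset\mathbb R$, with $|\mathcal P|<\mathfrak{c}$ and $|X|<\mathfrak{c}$. Then there exists a set $Y=\{y_\xi:\xi<\mathfrak{c}\}\subset\mathbb R$ such that $P(y_{\xi_1},y_{\xi_2},\ldots,y_{\xi_n})\notin X$ for every $n\ge1$, every polynomial $P\in\mathcal P$ in $n$ variables and every choice of pairwise distinct ordinals $\xi_1,\dots,\xi_n<\mathfrak{c}$.
   Context: $\mathfrak{c}$ denotes the cardinality of $\mathbb R$, identified with the first ordinal of that cardinality. *)

theory Defs
  imports Complex_Main "HOL-Library.Poly_Mapping" "HOL-Library.Equipollence"
begin

text \<open>Real multivariate polynomials in the variables x_0, x_1, ... are represented as
finitely supported maps from monomials (finitely supported exponent vectors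
to real coefficients.\<close>

type_synonym rpoly = "(nat \<Rightarrow>\<^sub>0 nat) \<Rightarrow>\<^sub>0 real"

definition mono_eval :: "(nat \<Rightarrow>\<^sub>0 nat) \<Rightarrow> (nat \<Rightarrow> real) \<Rightarrow> real" where
  "mono_eval m v = (\<Prod>i\<in>Poly_Mapping.keys m. v i ^ Poly_Mapping.lookup m i)"

definition poly_eval :: "rpoly \<Rightarrow> (nat \<Rightarrow> real) \<Rightarrow> real" where
  "poly_eval P v = (\<Sum>m\<in>Poly_Mapping.keys P. Poly_Mapping.lookup P m * mono_eval m v)"

definition poly_in_vars :: "nat \<Rightarrow> rpoly \<Rightarrow> bool" where
  "poly_in_vars n P \<longleftrightarrow> (\<forall>m\<in>Poly_Mapping.keys P. Poly_Mapping.keys m \<subseteq> {..<n})"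

end

theory Submission imports Defs "HOL-Analysis.Continuum_Not_Denumerable" "HOL-Computational_Algebra.Polynomial"
begin
unbundle cardinal_syntax

abbreviation small :: "'a set \<Rightarrow> bool" where "small A \<equiv> A \<prec> (UNIV::real set)"

lemma small_iff: "small A \<longleftrightarrow> |A| <o |UNIV::real set|"
proof
  assume "small A"
  then have "\<not> (UNIV::real set) \<lesssim> A"
    by (meson lepoll_antisym lesspoll_def)
  then show "|A| <o |UNIV::real set|"
    using card_of_ordLess[of "UNIV::real set" A] unfolding lepoll_def by blast
next
  assume a: "|A| <o |UNIV::real set|"
  then have "A \<lesssim> (UNIV::real set)"
    using card_of_ordLeq ordLess_imp_ordLeq unfolding lepoll_def by blast
  moreover have "\<not> A \<approx> (UNIV::real set)"
    using a eqpoll_iff_card_of_ordIso not_ordLess_ordIso by blast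
  ultimately show "small A" by (simp add: lesspoll_def)
qed

lemma small_countable: "countable A \<Longrightarrow> small A"
proof -
  assume c: "countable A"
  then obtain f :: "'a \<Rightarrow> nat" where "inj_on f A" by (auto simp: countable_def)
  then have "inj_on (real \<circ> f) A" by (simp add: inj_on_def)
  then have "A \<lesssim> (UNIV::real set)" unfolding lepoll_def by blast
  moreover have "\<not> A \<approx> (UNIV::real set)"
    using c countable_eqpoll eqpoll_sym uncountable_UNIV_real by blast
  ultimately show ?thesis by (simp add: lesspoll_def)
qed

lemma small_finite: "finite A \<Longrightarrow> small A"
  by (simp add: countable_finite small_countable)

lemma small_subset: "small A \<Longrightarrow> B \<subseteq> A \<Longrightarrow> small B"
  by (meson lesspoll_trans1 subset_imp_lepoll)

lemma small_image: "small A \<Longrightarrow> small (f ` A)"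
  by (meson image_lepoll lesspoll_trans1)

lemma small_not_UNIV: "small (A::real set) \<Longrightarrow> \<exists>x. x \<notin> A"
proof (rule ccontr)
  assume "small A" "\<not> (\<exists>x. x \<notin> A)"
  then have "A = UNIV" by blast
  with \<open>small A\<close> show False by simp
qed

lemma small_times: assumes "small A" "small B" shows "small (A \<times> B)"
proof (cases "finite A \<and> finite B")
  case True then show ?thesis by (simp add: small_finite)
next
  case False
  have a: "|A| <o |UNIV::real set|" "|B| <o |UNIV::real set|" using assms small_iff by auto
  show ?thesis
  proof (cases "A = {} \<or> B = {}")
    case True then show ?thesis by (auto simp: small_finite)
  next
    case ne: False
    have "|A| \<le>o |B| \<or> |B| \<le>o |A|" using ordLeq_total[OF card_of_Well_order card_of_Well_order] by blast
    then show ?thesis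
    proof
      assume le: "|A| \<le>o |B|"
      then have "infinite B" using False card_of_ordLeq_finite[OF le] by blast
      then have "|A \<times> B| =o |B|" using card_of_Times_infinite[of B A] ne le by blast
      then show ?thesis using a small_iff ordIso_ordLess_trans by blast
    next
      assume le: "|B| \<le>o |A|"
      then have "infinite A" using False card_of_ordLeq_finite[OF le] by blast
      then have "|A \<times> B| =o |A|" using card_of_Times_infinite[of A B] ne le by blast
      then show ?thesis using a small_iff ordIso_ordLess_trans by blast
    qed
  qed
qed

lemma lists_infinite_le: assumes "infinite A" shows "|lists A| \<le>o |A|"
proof -
  define L where "L n = {l \<in> lists A. length l = n}" for n
  have lev: "|L n| \<le>o |A|" for n
  proof (induction n)
    case 0
    have "L 0 = {[]}" by (auto simp: L_def)
    moreover have "A \<noteq> {}" using assms by auto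
    ultimately show ?case using card_of_singl_ordLeq[of A "[]"] by simp
  next
    case (Suc n)
    have "L (Suc n) \<subseteq> (\<lambda>(a,l). a # l) ` (A \<times> L n)"
    proof (rule subsetI)
      fix l assume "l \<in> L (Suc n)"
      then obtain a l' where "l = a # l'" "a \<in> A" "l' \<in> L n" unfolding L_def by (cases l) auto
      then show "l \<in> (\<lambda>(a,l). a#l) ` (A \<times> L n)" by force
    qed
    then have "|L (Suc n)| \<le>o |A \<times> L n|"
      using ordLeq_transitive[OF card_of_mono1 card_of_image] by blast
    also have "|A \<times> L n| \<le>o |A \<times> A|" using Suc card_of_Times_mono2 by blast
    also have "|A \<times> A| =o |A|" using assms card_of_Times_same_infinite by blast
    finally show ?case .
  qed
  have "lists A = (\<Union>n\<in>UNIV. L n)" by (auto simp: L_def)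
  moreover have "|\<Union>n\<in>(UNIV::nat set). L n| \<le>o |A|"
  proof (rule card_of_UNION_ordLeq_infinite[OF assms])
    show "|UNIV::nat set| \<le>o |A|" using infinite_iff_card_of_nat assms by blast
    show "\<forall>i\<in>UNIV. |L i| \<le>o |A|" using lev by blast
  qed
  ultimately show ?thesis by simp
qed

lemma small_lists: assumes "small A" shows "small (lists A)"
proof (cases "finite A")
  case True show ?thesis by (rule small_countable[OF countable_lists[OF countable_finite[OF True]]])
next
  case False
  have 1: "|lists A| \<le>o |A|" by (rule lists_infinite_le[OF False])
  have 2: "|A| <o |UNIV::real set|" using assms by (simp only: small_iff)
  have 3: "|lists A| <o |UNIV::real set|" by (rule ordLeq_ordLess_trans[OF 1 2])
  show ?thesis by (simp only: small_iff 3)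
qed

lemma small_UN_finite: assumes "small I" "\<And>i. i \<in> I \<Longrightarrow> finite (F i)"
  shows "small (\<Union>i\<in>I. F i)"
proof (cases "finite I")
  case True show ?thesis by (intro small_finite finite_UN_I True assms(2))
next
  case False
  have "\<forall>i\<in>I. |F i| \<le>o |I|"
  proof
    fix i assume "i \<in> I"
    then have a: "finite (Field |F i| )" unfolding Field_card_of by (rule assms(2))
    have b: "infinite (Field |I| )" unfolding Field_card_of by (rule False)
    show "|F i| \<le>o |I|"
      by (rule ordLess_imp_ordLeq[OF finite_ordLess_infinite[OF card_of_Well_order card_of_Well_order a b]])
  qed
  then have "|\<Union>i\<in>I. F i| \<le>o |I|" by (rule card_of_UNION_ordLeq_infinite[OF False ordIso_imp_ordLeq[OF card_of_refl]])
  moreover have 2: "|I| <o |UNIV::real set|" using assms(1) by (simp only: small_iff)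
  ultimately have 3: "|\<Union>i\<in>I. F i| <o |UNIV::real set|" by (rule ordLeq_ordLess_trans)
  show ?thesis by (simp only: small_iff 3)
qed


lemma small_insert: assumes "small A" shows "small (insert a A)"
proof (cases "A = {}")
  case True show ?thesis by (rule small_finite) (simp add: True)
next
  case False
  then obtain a0 where "a0 \<in> A" by blast
  have "insert a A \<subseteq> (\<lambda>(x,b). if b then x else a) ` (A \<times> (UNIV::bool set))"
  proof
    fix x assume "x \<in> insert a A"
    then show "x \<in> (\<lambda>(x,b). if b then x else a) ` (A \<times> (UNIV::bool set))"
    proof
      assume "x = a" then show ?thesis using \<open>a0 \<in> A\<close> by (auto intro!: image_eqI[where x="(a0, False)"])
    next
      assume "x \<in> A" then show ?thesis by (auto intro!: image_eqI[where x="(x, True)"])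
    qed
  qed
  moreover have "small ((\<lambda>(x,b). if b then x else a) ` (A \<times> (UNIV::bool set)))"
    by (intro small_image small_times assms small_finite) simp
  ultimately show ?thesis using small_subset by blast
qed

lemma small_Un: assumes "small A" "small B" shows "small (A \<union> B)"
proof (cases "A = {} \<or> B = {}")
  case True then show ?thesis using assms by (metis Un_empty_left Un_empty_right)
next
  case False
  then obtain a0 b0 where "a0 \<in> A" "b0 \<in> B" by blast
  have "A \<union> B \<subseteq> (\<lambda>(x,y,b). if b then x else y) ` (A \<times> B \<times> (UNIV::bool set))"
  proof
    fix x assume "x \<in> A \<union> B"
    then show "x \<in> (\<lambda>(x,y,b). if b then x else y) ` (A \<times> B \<times> (UNIV::bool set))"
    proof
      assume "x \<in> A" then show ?thesis using \<open>b0 \<in> B\<close> by (auto intro!: image_eqI[where x="(x, b0, True)"])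
    next
      assume "x \<in> B" then show ?thesis using \<open>a0 \<in> A\<close> by (auto intro!: image_eqI[where x="(a0, x, False)"])
    qed
  qed
  moreover have "small ((\<lambda>(x,y,b). if b then x else y) ` (A \<times> B \<times> (UNIV::bool set)))"
    by (intro small_image small_times assms small_finite) simp
  ultimately show ?thesis using small_subset by blast
qed

definition Vs :: "((nat \<Rightarrow>\<^sub>0 nat) \<Rightarrow> (nat \<Rightarrow>\<^sub>0 nat)) \<Rightarrow> (nat \<Rightarrow>\<^sub>0 nat) set \<Rightarrow> nat set" where
  "Vs \<mu> I = (\<Union>i\<in>I. Poly_Mapping.keys (\<mu> i))"

definition esum :: "(nat \<Rightarrow>\<^sub>0 nat) set \<Rightarrow> ((nat \<Rightarrow>\<^sub>0 nat) \<Rightarrow> real) \<Rightarrow> ((nat \<Rightarrow>\<^sub>0 nat) \<Rightarrow> (nat \<Rightarrow>\<^sub>0 nat)) \<Rightarrow> (nat \<Rightarrow> real) \<Rightarrow> real" where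
  "esum I c \<mu> w = (\<Sum>i\<in>I. c i * mono_eval (\<mu> i) w)"

definition GEN :: "real set \<Rightarrow> real set \<Rightarrow> (real \<Rightarrow> real) \<Rightarrow> bool" where
  "GEN D S g \<longleftrightarrow> (\<forall>I c \<mu> (\<xi>::nat \<Rightarrow> real). finite I \<longrightarrow> inj_on \<mu> I \<longrightarrow> c ` I \<subseteq> D \<longrightarrow> (\<exists>i\<in>I. c i \<noteq> 0)
     \<longrightarrow> inj_on \<xi> (Vs \<mu> I) \<longrightarrow> \<xi> ` Vs \<mu> I \<subseteq> S \<longrightarrow> esum I c \<mu> (\<lambda>x. g (\<xi> x)) \<noteq> 0)"

lemma GEN_D: assumes "GEN D S g" "finite I" "inj_on \<mu> I" "c ` I \<subseteq> D" "i \<in> I" "c i \<noteq> 0"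
  "inj_on \<xi> (Vs \<mu> I)" "\<xi> ` Vs \<mu> I \<subseteq> S" shows "esum I c \<mu> (\<lambda>x. g (\<xi> x)) \<noteq> 0"
  by (rule assms(1)[unfolded GEN_def, rule_format, OF assms(2) assms(3) assms(4) bexI[where P="\<lambda>i. c i \<noteq> 0", OF assms(6) assms(5)] assms(7) assms(8)])

lemma mono_eval_cong: "(\<And>i. i \<in> Poly_Mapping.keys m \<Longrightarrow> v i = w i) \<Longrightarrow> mono_eval m v = mono_eval m w"
  unfolding mono_eval_def by (rule prod.cong) auto

lemma esum_cong: assumes "\<And>x. x \<in> Vs \<mu> I \<Longrightarrow> v x = w x" shows "esum I c \<mu> v = esum I c \<mu> w"
  unfolding esum_def
proof (rule sum.cong[OF refl])
  fix i assume "i \<in> I"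
  then have "mono_eval (\<mu> i) v = mono_eval (\<mu> i) w"
    by (intro mono_eval_cong assms) (auto simp: Vs_def)
  then show "c i * mono_eval (\<mu> i) v = c i * mono_eval (\<mu> i) w" by simp
qed

lemma GEN_cong: assumes "GEN D S g" "\<And>a. a \<in> S \<Longrightarrow> g a = g' a" shows "GEN D S g'"
  unfolding GEN_def
proof (intro allI impI)
  fix I c \<mu> and \<xi> :: "nat \<Rightarrow> real"
  assume h: "finite I" "inj_on \<mu> I" "c ` I \<subseteq> D" "\<exists>i\<in>I. c i \<noteq> 0" "inj_on \<xi> (Vs \<mu> I)" "\<xi> ` Vs \<mu> I \<subseteq> S"
  obtain i where i: "i \<in> I" "c i \<noteq> 0" using h(4) by blast
  have "esum I c \<mu> (\<lambda>x. g (\<xi> x)) \<noteq> 0" by (rule GEN_D[OF assms(1) h(1-3) i h(5-6)])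
  moreover have "esum I c \<mu> (\<lambda>x. g (\<xi> x)) = esum I c \<mu> (\<lambda>x. g' (\<xi> x))"
  proof (rule esum_cong)
    fix x assume "x \<in> Vs \<mu> I"
    then have "\<xi> x \<in> S" using h(6) by blast
    then show "g (\<xi> x) = g' (\<xi> x)" by (rule assms(2))
  qed
  ultimately show "esum I c \<mu> (\<lambda>x. g' (\<xi> x)) \<noteq> 0" by simp
qed

lemma mono_eval_zero [simp]: "mono_eval 0 w = 1"
  by (simp add: mono_eval_def)

lemma GEN_empty: "GEN D {} g"
  unfolding GEN_def
proof (intro allI impI)
  fix I c \<mu> and \<xi> :: "nat \<Rightarrow> real"
  assume h: "finite I" "inj_on \<mu> I" "c ` I \<subseteq> D" "\<exists>i\<in>I. c i \<noteq> 0" "inj_on \<xi> (Vs \<mu> I)" "\<xi> ` Vs \<mu> I \<subseteq> {}"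
  then have z: "\<And>i. i \<in> I \<Longrightarrow> \<mu> i = 0" by (auto simp: Vs_def)
  obtain i0 where i0: "i0 \<in> I" "c i0 \<noteq> 0" using h(4) by blast
  have "I = {i0}"
  proof
    show "I \<subseteq> {i0}" using z h(2) i0(1) by (auto simp: inj_on_def)
  qed (use i0 in auto)
  then show "esum I c \<mu> (\<lambda>x. g (\<xi> x)) \<noteq> 0" using i0 z by (simp add: esum_def)
qed

definition strip :: "nat \<Rightarrow> (nat \<Rightarrow>\<^sub>0 nat) \<Rightarrow> (nat \<Rightarrow>\<^sub>0 nat)" where
  "strip j m = m - Poly_Mapping.single j (Poly_Mapping.lookup m j)"

lemma lookup_strip: "Poly_Mapping.lookup (strip j m) i = (if i = j then 0 else Poly_Mapping.lookup m i)"
  by (simp add: strip_def lookup_minus lookup_single)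

lemma keys_strip: "Poly_Mapping.keys (strip j m) = Poly_Mapping.keys m - {j}"
  by (auto simp: in_keys_iff lookup_strip split: if_splits)

lemma strip_inj: "Poly_Mapping.lookup a j = Poly_Mapping.lookup b j \<Longrightarrow> strip j a = strip j b \<Longrightarrow> a = b"
  by (rule poly_mapping_eqI) (metis lookup_strip)

lemma mono_split: "mono_eval m w = w j ^ Poly_Mapping.lookup m j * mono_eval (strip j m) w"
proof (cases "j \<in> Poly_Mapping.keys m")
  case True
  have "mono_eval m w = w j ^ Poly_Mapping.lookup m j * (\<Prod>i\<in>Poly_Mapping.keys m - {j}. w i ^ Poly_Mapping.lookup m i)"
    unfolding mono_eval_def using True by (simp add: prod.remove)
  also have "(\<Prod>i\<in>Poly_Mapping.keys m - {j}. w i ^ Poly_Mapping.lookup m i) = mono_eval (strip j m) w"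
    unfolding mono_eval_def keys_strip by (rule prod.cong) (auto simp: lookup_strip)
  finally show ?thesis .
next
  case False
  then have "Poly_Mapping.lookup m j = 0" by (simp add: in_keys_iff)
  then show ?thesis by (simp add: strip_def)
qed

definition Vals :: "real set \<Rightarrow> real set \<Rightarrow> (real \<Rightarrow> real) \<Rightarrow> real set" where
  "Vals D S g = {esum I c \<mu> (\<lambda>x. g (\<xi> x)) | I c \<mu> (\<xi>::nat\<Rightarrow>real). finite I \<and> c ` I \<subseteq> D \<and> \<xi> ` Vs \<mu> I \<subseteq> S}"

definition Fl :: "(real \<times> real list) list \<Rightarrow> real" where
  "Fl l = sum_list (map (\<lambda>(c,ms). c * prod_list ms) l)"

lemma Vals_small: assumes "small D" "small S" shows "small (Vals D S g)"
proof -
  define P where "P = (\<lambda>(b,e). b ^ e) ` (g ` S \<times> (UNIV :: nat set))"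
  have sP: "small P" unfolding P_def
    by (intro small_image small_times assms small_countable) simp
  have "Vals D S g \<subseteq> Fl ` lists (D \<times> lists P)"
  proof
    fix v assume "v \<in> Vals D S g"
    then obtain I c \<mu> and \<xi> :: "nat \<Rightarrow> real" where v: "v = esum I c \<mu> (\<lambda>x. g (\<xi> x))"
      and h: "finite I" "c ` I \<subseteq> D" "\<xi> ` Vs \<mu> I \<subseteq> S"
      using \<open>v \<in> Vals D S g\<close> unfolding Vals_def mem_Collect_eq by (elim exE conjE) (rule that)
    obtain li where li: "set li = I" "distinct li" using finite_distinct_list[OF h(1)] by blast
    define ms where "ms i = map (\<lambda>x. (g (\<xi> x)) ^ Poly_Mapping.lookup (\<mu> i) x) (sorted_list_of_set (Poly_Mapping.keys (\<mu> i)))" for i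
    define l where "l = map (\<lambda>i. (c i, ms i)) li"
    have pm: "prod_list (ms i) = mono_eval (\<mu> i) (\<lambda>x. g (\<xi> x))" for i
      unfolding ms_def mono_eval_def
      by (subst prod.distinct_set_conv_list[symmetric]) auto
    have "Fl l = (\<Sum>i\<leftarrow>li. c i * prod_list (ms i))"
      unfolding Fl_def l_def by (simp add: comp_def)
    also have "\<dots> = (\<Sum>i\<in>I. c i * prod_list (ms i))"
      unfolding li(1)[symmetric] using li(2) by (simp add: sum.distinct_set_conv_list)
    also have "\<dots> = v" unfolding v esum_def pm ..
    finally have "Fl l = v" .
    moreover have "l \<in> lists (D \<times> lists P)"
    proof -
      have "c i \<in> D \<and> ms i \<in> lists P" if "i \<in> I" for i
      proof
        show "c i \<in> D" using h(2) that by blast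
        have "g (\<xi> x) ^ Poly_Mapping.lookup (\<mu> i) x \<in> P" if "x \<in> Poly_Mapping.keys (\<mu> i)" for x
        proof -
          have "\<xi> x \<in> S" using h(3) that \<open>i \<in> I\<close> unfolding Vs_def by blast
          then have "(g (\<xi> x), Poly_Mapping.lookup (\<mu> i) x) \<in> g ` S \<times> (UNIV :: nat set)" by blast
          then show ?thesis unfolding P_def by (rule rev_image_eqI) simp
        qed
        then show "ms i \<in> lists P" unfolding ms_def lists_eq_set by auto
      qed
      then show ?thesis unfolding l_def lists_eq_set using li(1) by auto
    qed
    ultimately show "v \<in> Fl ` lists (D \<times> lists P)" by blast
  qed
  moreover have "small (Fl ` lists (D \<times> lists P))"
    by (intro small_image small_lists small_times assms sP)
  ultimately show ?thesis using small_subset by blast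
qed

definition Bad :: "real set \<Rightarrow> real set \<Rightarrow> (real \<Rightarrow> real) \<Rightarrow> real set" where
  "Bad D S g = (\<Union>p\<in>{p. p \<noteq> 0 \<and> (\<forall>n. coeff p n \<in> insert 0 (Vals D S g))}. {t. poly p t = 0})"

lemma Bad_small: assumes "small D" "small S" shows "small (Bad D S g)"
  unfolding Bad_def
proof (rule small_UN_finite)
  have "{p. p \<noteq> 0 \<and> (\<forall>n. coeff p n \<in> insert 0 (Vals D S g))} \<subseteq> Poly ` lists (insert 0 (Vals D S g))"
  proof
    fix p :: "real poly" assume "p \<in> {p. p \<noteq> 0 \<and> (\<forall>n. coeff p n \<in> insert 0 (Vals D S g))}"
    then have "\<forall>n. coeff p n \<in> insert 0 (Vals D S g)" by blast
    moreover have "set (coeffs p) \<subseteq> range (coeff p)" unfolding range_coeff by (rule subset_insertI)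
    ultimately have "set (coeffs p) \<subseteq> insert 0 (Vals D S g)" by blast
    then have "coeffs p \<in> lists (insert 0 (Vals D S g))" by (simp add: lists_eq_set)
    then show "p \<in> Poly ` lists (insert 0 (Vals D S g))" by (rule rev_image_eqI) simp
  qed
  moreover have "small (insert (0::real) (Vals D S g))"
    by (intro small_insert Vals_small assms)
  ultimately show "small {p. p \<noteq> 0 \<and> (\<forall>n. coeff p n \<in> insert 0 (Vals D S g))}"
    by (rule small_subset[OF small_image[OF small_lists], rotated])
next
  fix p :: "real poly" assume "p \<in> {p. p \<noteq> 0 \<and> (\<forall>n. coeff p n \<in> insert 0 (Vals D S g))}"
  then have "p \<noteq> 0" by blast
  then show "finite {t. poly p t = 0}" by (rule poly_roots_finite)
qed


lemma ValsI: "finite I \<Longrightarrow> c ` I \<subseteq> D \<Longrightarrow> \<xi> ` Vs \<mu> I \<subseteq> S \<Longrightarrow> esum I c \<mu> (\<lambda>x. g (\<xi> x)) \<in> Vals D S g"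
  unfolding Vals_def by blast

lemma EXT:
  assumes G: "GEN D S g" and t: "t \<notin> Bad D S g" and g'r: "g' r = t" and g'S: "\<And>a. a \<in> S \<Longrightarrow> g' a = g a"
  shows "GEN D (insert r S) g'"
  unfolding GEN_def
proof (intro allI impI)
  fix I c \<mu> and \<xi> :: "nat \<Rightarrow> real"
  assume h: "finite I" "inj_on \<mu> I" "c ` I \<subseteq> D" "\<exists>i\<in>I. c i \<noteq> 0" "inj_on \<xi> (Vs \<mu> I)" "\<xi> ` Vs \<mu> I \<subseteq> insert r S"
  obtain i0 where i0: "i0 \<in> I" "c i0 \<noteq> 0" using h(4) by blast
  show "esum I c \<mu> (\<lambda>x. g' (\<xi> x)) \<noteq> 0"
  proof (cases "r \<in> \<xi> ` Vs \<mu> I")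
    case False
    then have sub: "\<xi> ` Vs \<mu> I \<subseteq> S" using h(6) by blast
    have "esum I c \<mu> (\<lambda>x. g (\<xi> x)) \<noteq> 0" by (rule GEN_D[OF G h(1-3) i0 h(5) sub])
    moreover have "esum I c \<mu> (\<lambda>x. g' (\<xi> x)) = esum I c \<mu> (\<lambda>x. g (\<xi> x))"
    proof (rule esum_cong)
      fix x assume "x \<in> Vs \<mu> I" then have "\<xi> x \<in> S" using sub by blast
      then show "g' (\<xi> x) = g (\<xi> x)" by (rule g'S)
    qed
    ultimately show ?thesis by simp
  next
    case True
    then obtain j where j: "j \<in> Vs \<mu> I" "\<xi> j = r" by blast
    define e where "e i = Poly_Mapping.lookup (\<mu> i) j" for i
    define st where "st i = strip j (\<mu> i)" for i
    define Ik where "Ik k = {i\<in>I. e i = k}" for k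
    define a where "a k = esum (Ik k) c st (\<lambda>x. g (\<xi> x))" for k
    have VsIk: "Vs st (Ik k) \<subseteq> Vs \<mu> I - {j}" for k
      unfolding Vs_def st_def Ik_def keys_strip by blast
    have inS: "\<xi> x \<in> S" if "x \<in> Vs st (Ik k)" for x k
    proof -
      have x: "x \<in> Vs \<mu> I" "x \<noteq> j" using VsIk that by blast+
      have "\<xi> x \<noteq> \<xi> j"
      proof
        assume "\<xi> x = \<xi> j"
        then have "x = j" using inj_onD[OF h(5) _ x(1) j(1)] by simp
        with x(2) show False by simp
      qed
      then have "\<xi> x \<noteq> r" using j(2) by simp
      moreover have "\<xi> x \<in> insert r S" using h(6) x(1) by blast
      ultimately show ?thesis by blast
    qed
    have aeq: "esum (Ik k) c st (\<lambda>x. g' (\<xi> x)) = a k" for k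
      unfolding a_def
    proof (rule esum_cong)
      fix x assume "x \<in> Vs st (Ik k)"
      then have "\<xi> x \<in> S" by (rule inS)
      then show "g' (\<xi> x) = g (\<xi> x)" by (rule g'S)
    qed
    have "esum I c \<mu> (\<lambda>x. g' (\<xi> x)) = (\<Sum>i\<in>I. t ^ e i * (c i * mono_eval (st i) (\<lambda>x. g' (\<xi> x))))"
      unfolding esum_def
    proof (rule sum.cong[OF refl])
      fix i assume "i \<in> I"
      show "c i * mono_eval (\<mu> i) (\<lambda>x. g' (\<xi> x)) = t ^ e i * (c i * mono_eval (st i) (\<lambda>x. g' (\<xi> x)))"
        using mono_split[of "\<mu> i" "\<lambda>x. g' (\<xi> x)" j] j(2) g'r unfolding e_def st_def by simp
    qed
    also have "\<dots> = (\<Sum>k\<in>e ` I. \<Sum>i\<in>Ik k. t ^ e i * (c i * mono_eval (st i) (\<lambda>x. g' (\<xi> x))))"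
      unfolding Ik_def by (rule sum.image_gen[OF h(1)])
    also have "\<dots> = (\<Sum>k\<in>e ` I. t ^ k * esum (Ik k) c st (\<lambda>x. g' (\<xi> x)))"
    proof (rule sum.cong[OF refl])
      fix k
      have "(\<Sum>i\<in>Ik k. t ^ e i * (c i * mono_eval (st i) (\<lambda>x. g' (\<xi> x))))
          = (\<Sum>i\<in>Ik k. t ^ k * (c i * mono_eval (st i) (\<lambda>x. g' (\<xi> x))))"
        by (rule sum.cong) (auto simp: Ik_def)
      then show "(\<Sum>i\<in>Ik k. t ^ e i * (c i * mono_eval (st i) (\<lambda>x. g' (\<xi> x)))) = t ^ k * esum (Ik k) c st (\<lambda>x. g' (\<xi> x))"
        unfolding esum_def by (simp add: sum_distrib_left)
    qed
    also have "\<dots> = (\<Sum>k\<in>e ` I. a k * t ^ k)" using aeq by (simp add: mult.commute)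
    finally have sumeq: "esum I c \<mu> (\<lambda>x. g' (\<xi> x)) = (\<Sum>k\<in>e ` I. a k * t ^ k)" .
    define p where "p = (\<Sum>k\<in>e ` I. monom (a k) k)"
    have coeffp: "coeff p n = (if n \<in> e ` I then a n else 0)" for n
      unfolding p_def coeff_sum coeff_monom using h(1) by (simp add: sum.delta)
    have polyp: "poly p t = (\<Sum>k\<in>e ` I. a k * t ^ k)" unfolding p_def poly_sum poly_monom ..
    have fin: "finite (Ik k)" for k using h(1) unfolding Ik_def by simp
    have cD: "c ` Ik k \<subseteq> D" for k using h(3) unfolding Ik_def by auto
    have ak0: "a (e i0) \<noteq> 0"
      unfolding a_def
    proof (rule GEN_D[OF G])
      show "finite (Ik (e i0))" by (rule fin)
      show "inj_on st (Ik (e i0))"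
      proof (rule inj_onI)
        fix x y assume xy: "x \<in> Ik (e i0)" "y \<in> Ik (e i0)" "st x = st y"
        have "\<mu> x = \<mu> y"
        proof (rule strip_inj[of _ j])
          show "Poly_Mapping.lookup (\<mu> x) j = Poly_Mapping.lookup (\<mu> y) j" using xy unfolding Ik_def e_def by simp
          show "strip j (\<mu> x) = strip j (\<mu> y)" using xy unfolding st_def by simp
        qed
        then show "x = y" using h(2) xy unfolding Ik_def inj_on_def by blast
      qed
      show "c ` Ik (e i0) \<subseteq> D" by (rule cD)
      show "i0 \<in> Ik (e i0)" using i0 unfolding Ik_def by simp
      show "c i0 \<noteq> 0" by (rule i0(2))
      show "inj_on \<xi> (Vs st (Ik (e i0)))" using inj_on_subset[OF h(5)] VsIk by blast
      show "\<xi> ` Vs st (Ik (e i0)) \<subseteq> S" using inS by blast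
    qed
    have "p \<noteq> 0"
    proof
      assume "p = 0"
      then have "coeff p (e i0) = 0" by simp
      with coeffp ak0 i0(1) show False by simp
    qed
    moreover have "\<forall>n. coeff p n \<in> insert 0 (Vals D S g)"
    proof
      fix n show "coeff p n \<in> insert 0 (Vals D S g)"
      proof (cases "n \<in> e ` I")
        case True
        have "\<xi> ` Vs st (Ik n) \<subseteq> S" using inS by blast
        then have "a n \<in> Vals D S g" unfolding a_def by (rule ValsI[OF fin cD])
        with True coeffp show ?thesis by simp
      next
        case False with coeffp show ?thesis by simp
      qed
    qed
    ultimately have pin: "p \<in> {p. p \<noteq> 0 \<and> (\<forall>n. coeff p n \<in> insert 0 (Vals D S g))}" by blast
    show ?thesis
    proof
      assume "esum I c \<mu> (\<lambda>x. g' (\<xi> x)) = 0"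
      then have "poly p t = 0" using sumeq polyp by simp
      then have "t \<in> Bad D S g" unfolding Bad_def using pin by blast
      with t show False by contradiction
    qed
  qed
qed


lemma exists_big:
  assumes sD: "small D"
  shows "\<exists>M :: (real \<times> real) set. GEN D (Domain M) (\<lambda>a. SOME b. (a,b) \<in> M) \<and> \<not> small (Domain M)"
proof -
  define A where "A = {G::(real\<times>real) set. single_valued G \<and> GEN D (Domain G) (\<lambda>a. SOME b. (a,b) \<in> G)}"
  have "\<forall>C\<in>chains A. \<Union>C \<in> A"
  proof
    fix C assume C: "C \<in> chains A"
    then have CA: "C \<subseteq> A" and ch: "chain\<^sub>\<subseteq> C" by (auto simp: chains_def)
    define gU where "gU a = (SOME b. (a,b) \<in> \<Union>C)" for a
    have sv: "single_valued (\<Union>C)"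
    proof (rule single_valuedI)
      fix x y z assume "(x,y) \<in> \<Union>C" "(x,z) \<in> \<Union>C"
      then obtain G1 G2 where G: "G1\<in>C" "G2\<in>C" "(x,y)\<in>G1" "(x,z)\<in>G2" by blast
      with ch have "(x,y)\<in>G1 \<and> (x,z)\<in>G1 \<or> (x,y)\<in>G2 \<and> (x,z)\<in>G2" unfolding chain_subset_def by blast
      moreover have "single_valued G1" "single_valued G2" using CA G(1,2) unfolding A_def by auto
      ultimately show "y = z" by (auto dest: single_valuedD)
    qed
    have "GEN D (Domain (\<Union>C)) gU"
      unfolding GEN_def
    proof (intro allI impI)
      fix I c \<mu> and \<xi> :: "nat \<Rightarrow> real"
      assume h: "finite I" "inj_on \<mu> I" "c ` I \<subseteq> D" "\<exists>i\<in>I. c i \<noteq> 0" "inj_on \<xi> (Vs \<mu> I)" "\<xi> ` Vs \<mu> I \<subseteq> Domain (\<Union>C)"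
      obtain i0 where i0: "i0 \<in> I" "c i0 \<noteq> 0" using h(4) by blast
      show "esum I c \<mu> (\<lambda>x. gU (\<xi> x)) \<noteq> 0"
      proof (cases "\<xi> ` Vs \<mu> I = {}")
        case True
        then have "\<xi> ` Vs \<mu> I \<subseteq> {}" by simp
        then show ?thesis by (rule GEN_D[OF GEN_empty h(1-3) i0 h(5)])
      next
        case False
        define F where "F = (\<lambda>a. (a, gU a)) ` (\<xi> ` Vs \<mu> I)"
        have finF: "finite F" unfolding F_def Vs_def using h(1) by simp
        have FU: "F \<subseteq> \<Union>C"
        proof
          fix p assume "p \<in> F"
          then obtain a where a: "a \<in> \<xi> ` Vs \<mu> I" "p = (a, gU a)" unfolding F_def by blast
          then have "\<exists>b. (a,b) \<in> \<Union>C" using h(6) by blast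
          then have "(a, gU a) \<in> \<Union>C" unfolding gU_def by (rule someI_ex)
          then show "p \<in> \<Union>C" using a(2) by simp
        qed
        have "C \<noteq> {}" using False h(6) by auto
        obtain B where B: "B \<in> C" "F \<subseteq> B"
          using finite_subset_Union_chain[OF finF FU \<open>C \<noteq> {}\<close> ch[unfolded chain_subset_alt_def]] by blast
        have BA: "single_valued B" "GEN D (Domain B) (\<lambda>a. SOME b. (a,b) \<in> B)" using CA B(1) unfolding A_def by auto
        have sub: "\<xi> ` Vs \<mu> I \<subseteq> Domain B" using B(2) unfolding F_def by force
        have "GEN D (Domain B) gU"
        proof (rule GEN_cong[OF BA(2)])
          fix a assume "a \<in> Domain B"
          then have "\<exists>b. (a,b) \<in> B" by blast
          then have 1: "(a, SOME b. (a,b) \<in> B) \<in> \<Union>C" using B(1) by (meson UnionI someI_ex)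
          have "\<exists>b. (a,b) \<in> \<Union>C" using 1 by blast
          then have 2: "(a, gU a) \<in> \<Union>C" unfolding gU_def by (rule someI_ex)
          show "(SOME b. (a,b) \<in> B) = gU a" by (rule single_valuedD[OF sv 1 2])
        qed
        then show ?thesis by (rule GEN_D[OF _ h(1-3) i0 h(5) sub])
      qed
    qed
    then show "\<Union>C \<in> A" unfolding A_def gU_def using sv by blast
  qed
  then obtain M where M: "M \<in> A" and max: "\<forall>X\<in>A. M \<subseteq> X \<longrightarrow> X = M" using Zorn_Lemma by blast
  define g where "g a = (SOME b. (a,b) \<in> M)" for a
  have G: "GEN D (Domain M) g" "single_valued M" using M unfolding A_def g_def by auto
  have "\<not> small (Domain M)"
  proof
    assume sm: "small (Domain M)"
    obtain r where r: "r \<notin> Domain M" using small_not_UNIV[OF sm] by blast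
    obtain t where t: "t \<notin> Bad D (Domain M) g" using small_not_UNIV[OF Bad_small[OF sD sm]] by blast
    define M' where "M' = insert (r,t) M"
    define g' where "g' a = (SOME b. (a,b) \<in> M')" for a
    have sv': "single_valued M'" using G(2) r unfolding M'_def single_valued_def by blast
    have g'r: "g' r = t" unfolding g'_def M'_def
      by (rule some_equality) (use r in auto)
    have g'S: "g' a = g a" if "a \<in> Domain M" for a
    proof -
      have "\<exists>b. (a,b) \<in> M" using that by blast
      then have 1: "(a, g a) \<in> M'" unfolding g_def M'_def by (meson insertI2 someI_ex)
      then have "\<exists>b. (a,b) \<in> M'" by blast
      then have 2: "(a, g' a) \<in> M'" unfolding g'_def by (rule someI_ex)
      show ?thesis by (rule single_valuedD[OF sv' 2 1])
    qed
    have "GEN D (insert r (Domain M)) g'" by (rule EXT[OF G(1) t g'r g'S])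
    moreover have "insert r (Domain M) = Domain M'" unfolding M'_def by simp
    moreover have "g' = (\<lambda>a. SOME b. (a,b) \<in> M')" by (simp add: g'_def fun_eq_iff)
    ultimately have "M' \<in> A" unfolding A_def using sv' by simp
    then have "M' = M" using max unfolding M'_def by blast
    then show False using r unfolding M'_def by auto
  qed
  then show ?thesis using G(1) unfolding g_def by blast
qed

lemma mono_eval_single1: "mono_eval (Poly_Mapping.single i (1::nat)) w = w i"
  by (simp add: mono_eval_def)

theorem lemma2p5:
  fixes \<P> :: "rpoly set" and X :: "real set"
  assumes "\<forall>P\<in>\<P>. P \<noteq> 0 \<and> Poly_Mapping.lookup P 0 = 0"
    and "\<P> \<prec> (UNIV :: real set)"
    and "X \<prec> (UNIV :: real set)"
  shows "\<exists>y :: real \<Rightarrow> real. inj y \<and>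
           (\<forall>n \<ge> 1. \<forall>P\<in>\<P>. poly_in_vars n P \<longrightarrow>
              (\<forall>\<xi> :: nat \<Rightarrow> real. inj_on \<xi> {..<n} \<longrightarrow>
                 poly_eval P (\<lambda>i. y (\<xi> i)) \<notin> X))"
proof -
  define D where "D = (\<Union>P\<in>\<P>. Poly_Mapping.lookup P ` Poly_Mapping.keys P) \<union> (uminus ` X \<union> {1, -1})"
  have sD: "small D" unfolding D_def
  proof (rule small_Un)
    show "small (\<Union>P\<in>\<P>. Poly_Mapping.lookup P ` Poly_Mapping.keys P)"
      by (rule small_UN_finite[OF assms(2)]) simp
    show "small (uminus ` X \<union> {1, - 1::real})"
      by (rule small_Un[OF small_image[OF assms(3)] small_finite]) simp
  qed
  obtain M :: "(real \<times> real) set" where M: "GEN D (Domain M) (\<lambda>a. SOME b. (a,b) \<in> M)" "\<not> small (Domain M)"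
    using exists_big[OF sD] by blast
  define g where "g a = (SOME b. (a,b) \<in> M)" for a
  have G: "GEN D (Domain M) g" using M(1) unfolding g_def by simp
  have "Domain M \<lesssim> (UNIV::real set)" by (rule subset_imp_lepoll) simp
  then have "Domain M \<approx> (UNIV::real set)" using M(2) lepoll_iff_leqpoll by blast
  then obtain h where h: "bij_betw h (UNIV::real set) (Domain M)" using eqpoll_sym unfolding eqpoll_def by blast
  have hinj: "inj h" using h bij_betw_imp_inj_on by blast
  have hrange: "h a \<in> Domain M" for a using h bij_betwE by blast
  define y where "y a = g (h a)" for a
  have injy: "inj y"
  proof (rule injI, rule ccontr)
    fix a b assume eq: "y a = y b" and ne: "a \<noteq> b"
    define m1 where "m1 = Poly_Mapping.single (1::nat) (1::nat)"
    define m2 where "m2 = Poly_Mapping.single (2::nat) (1::nat)"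
    have m12: "m1 \<noteq> m2"
    proof
      assume "m1 = m2"
      then have "Poly_Mapping.lookup m1 1 = Poly_Mapping.lookup m2 1" by simp
      then show False unfolding m1_def m2_def by (simp add: lookup_single_not_eq)
    qed
    define c where "c m = (if m = m1 then 1 else -1::real)" for m
    define \<xi> where "\<xi> i = (if i = (1::nat) then h a else h b)" for i
    have Vs: "Vs id {m1, m2} = {1, 2}" unfolding Vs_def m1_def m2_def by auto
    have "esum {m1, m2} c id (\<lambda>x. g (\<xi> x)) \<noteq> 0"
    proof (rule GEN_D[OF G])
      show "finite {m1, m2}" by simp
      show "inj_on id {m1, m2}" by simp
      show "c ` {m1, m2} \<subseteq> D" unfolding c_def D_def by auto
      show "m1 \<in> {m1, m2}" by simp
      show "c m1 \<noteq> 0" unfolding c_def by simp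
      have "h a \<noteq> h b" using hinj ne by (meson injD)
      then show "inj_on \<xi> (Vs id {m1, m2})" unfolding Vs \<xi>_def inj_on_def by auto
      show "\<xi> ` Vs id {m1, m2} \<subseteq> Domain M" unfolding Vs \<xi>_def using hrange by auto
    qed
    moreover have "esum {m1, m2} c id (\<lambda>x. g (\<xi> x)) = y a - y b"
    proof -
      have e1: "mono_eval m1 w = w 1" for w unfolding m1_def by (rule mono_eval_single1)
      have e2: "mono_eval m2 w = w 2" for w unfolding m2_def by (rule mono_eval_single1)
      show ?thesis unfolding esum_def using m12 by (simp add: c_def e1 e2 \<xi>_def y_def)
    qed
    ultimately show False using eq by simp
  qed
  have main: "poly_eval P (\<lambda>i. y (\<xi> i)) \<notin> X"
    if P: "P \<in> \<P>" and piv: "poly_in_vars n P" and inj: "inj_on \<xi> {..<n}" for n P and \<xi> :: "nat \<Rightarrow> real"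
  proof
    define x where "x = poly_eval P (\<lambda>i. y (\<xi> i))"
    assume "poly_eval P (\<lambda>i. y (\<xi> i)) \<in> X"
    then have xX: "x \<in> X" unfolding x_def .
    have P0: "P \<noteq> 0" "Poly_Mapping.lookup P 0 = 0" using assms(1) P by auto
    have nk: "0 \<notin> Poly_Mapping.keys P" using P0(2) by (simp add: in_keys_iff)
    define I where "I = insert 0 (Poly_Mapping.keys P)"
    define c where "c m = (if m = 0 then -x else Poly_Mapping.lookup P m)" for m
    define \<xi>' where "\<xi>' i = h (\<xi> i)" for i
    have VsI: "Vs id I = (\<Union>m\<in>Poly_Mapping.keys P. Poly_Mapping.keys m)" unfolding Vs_def I_def by simp
    have VsS: "Vs id I \<subseteq> {..<n}" using piv unfolding VsI poly_in_vars_def by blast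
    obtain m0 where m0: "m0 \<in> Poly_Mapping.keys P" using P0(1) by (metis ex_in_conv keys_eq_empty)
    have "esum I c id (\<lambda>i. g (\<xi>' i)) \<noteq> 0"
    proof (rule GEN_D[OF G])
      show "finite I" unfolding I_def by simp
      show "inj_on id I" by simp
      show "c ` I \<subseteq> D" unfolding I_def c_def D_def using P xX by auto
      show "m0 \<in> I" unfolding I_def using m0 by simp
      show "c m0 \<noteq> 0" unfolding c_def using m0 nk by (auto simp: in_keys_iff)
      show "inj_on \<xi>' (Vs id I)" unfolding \<xi>'_def
        using comp_inj_on[OF inj_on_subset[OF inj VsS] inj_on_subset[OF hinj subset_UNIV]] by (simp add: comp_def)
      show "\<xi>' ` Vs id I \<subseteq> Domain M" unfolding \<xi>'_def using hrange by auto
    qed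
    moreover have "esum I c id (\<lambda>i. g (\<xi>' i)) = -x + poly_eval P (\<lambda>i. y (\<xi> i))"
    proof -
      have "esum I c id (\<lambda>i. g (\<xi>' i)) = c 0 * mono_eval 0 (\<lambda>i. g (\<xi>' i)) + (\<Sum>m\<in>Poly_Mapping.keys P. c m * mono_eval m (\<lambda>i. g (\<xi>' i)))"
        unfolding esum_def I_def using nk by simp
      also have "(\<Sum>m\<in>Poly_Mapping.keys P. c m * mono_eval m (\<lambda>i. g (\<xi>' i))) = poly_eval P (\<lambda>i. y (\<xi> i))"
        unfolding poly_eval_def y_def \<xi>'_def
        by (rule sum.cong[OF refl]) (use nk in \<open>auto simp: c_def\<close>)
      moreover have "c 0 = -x" by (simp add: c_def)
      ultimately show ?thesis by simp
    qed
    ultimately show False unfolding x_def by simp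
  qed
  show ?thesis using injy main by blast
qed

end
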